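(* Let ${\bf r}=(r_0,r_1,\dots)$ be a finitely supported sequence of nonnegative integers with $n=\sum_{d\ge1}r_d$, and let $k\ge0$ be an integer. For any two ${\bf S}^{(1)},{\bf S}^{(2)}\in V_{\bf r}$, $$|\mathcal{CF}_{{\bf r},k,{\bf S}^{(1)}}|=|\mathcal{CF}_{{\bf r},k,{\bf S}^{(2)}}|.$$
   Context: A plane tree is an unlabelled rooted tree in which the children of every vertex are linearly ordered; a plane forest is a finite linearly ordered sequence of plane trees. For vertices $u,v$ in a tree, $v$ is a descendant of $u$ if $u$ lies on the path from the root to $v$ (so $u$ is a descendant of itself). The degree $d_v$ is the number of children of $v$; $v$ is internal if $d_v\ge1$. $I(F)$ is the set of internal vertices of $F$. A plane forest has type ${\bf r}$ if it has exactly $r_i$ vertices of degree $i$ for all $i\ge0$. A labelled forest is a plane forest $F$ together with a bijection (labelling) $I(F)\to[n]$. An internal vertex $v$ of a labelled forest is proper if no internal descendant of $v$ has a smaller label than $v$, and improper otherwise. Fix colors $c_1,c_2,\dots$ and distinct special colors $c_1',c_2',\dots$. A proper $k$-coloring of a labelled forest assigns to each internal vertex $v$ a color, taken from $\{c_1,\dots,c_{d_v}\}$ if $v$ is proper and from $\{c_1,\dots,c_{d_v}\}\cup\{c_1',\dots,c_k'\}$ if $v$ is improper. A $k$-colored labelled forest is a labelled forest together with a proper $k$-coloring; $\mathcal{CF}_{{\bf r},k}$ is the set of $k$-colored labelled forests whose underlying plane forest has type ${\bf r}$. $V_{\bf r}$ is the set of sequences ${\bf S}=(S_1,S_2,\dots)$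 of pairwise disjoint subsets of $[n]$ with union $[n]$ and $|S_i|=r_i$ for all $i\ge1$. For ${\bf S}\in V_{\bf r}$, $\mathcal{CF}_{{\bf r},k,{\bf S}}$ is the set of forests in $\mathcal{CF}_{{\bf r},k}$ in which every internal vertex $v$ has its label in $S_{d_v}$. *)

theory Defs
  imports Main
begin

text \<open>Colors: Col i stands for c_i, SCol j for the special color c'_j.\<close>
datatype color = Col nat | SCol nat

datatype ctree = Leaf | Inner nat color "ctree list"

fun labels :: "ctree \<Rightarrow> nat list" where
  "labels Leaf = []"
| "labels (Inner l c ts) = l # concat (map labels ts)"

fun degcount :: "nat \<Rightarrow> ctree \<Rightarrow> nat" where
  "degcount i Leaf = (if i = 0 then 1 else 0)"
| "degcount i (Inner l c ts) = (if length ts = i then 1 else 0) + sum_list (map (degcount i) ts)"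

definition proper_root :: "nat \<Rightarrow> ctree list \<Rightarrow> bool" where
  "proper_root l ts = (\<forall>m \<in> set (labels (Inner l (Col 0) ts)). \<not> m < l)"

fun wf_col :: "nat \<Rightarrow> ctree \<Rightarrow> bool" where
  "wf_col k Leaf = True"
| "wf_col k (Inner l c ts) =
     (ts \<noteq> [] \<and>
      (c \<in> {Col i | i. 1 \<le> i \<and> i \<le> length ts} \<or>
       (\<not> proper_root l ts \<and> c \<in> {SCol j | j. 1 \<le> j \<and> j \<le> k})) \<and>
      (\<forall>t \<in> set ts. wf_col k t))"

fun labels_in :: "(nat \<Rightarrow> nat set) \<Rightarrow> ctree \<Rightarrow> bool" where
  "labels_in S Leaf = True"
| "labels_in S (Inner l c ts) = (l \<in> S (length ts) \<and> (\<forall>t \<in> set ts. labels_in S t))"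

definition forest_labels :: "ctree list \<Rightarrow> nat list" where
  "forest_labels F = concat (map labels F)"

definition n_of :: "(nat \<Rightarrow> nat) \<Rightarrow> nat" where
  "n_of r = (\<Sum>d \<in> {d. 1 \<le> d \<and> r d \<noteq> 0}. r d)"

definition CF :: "(nat \<Rightarrow> nat) \<Rightarrow> nat \<Rightarrow> ctree list set" where
  "CF r k = {F. (\<forall>t \<in> set F. wf_col k t) \<and>
                distinct (forest_labels F) \<and> set (forest_labels F) = {1..n_of r} \<and>
                (\<forall>i. sum_list (map (degcount i) F) = r i)}"

text \<open>V_r: sequences (S_1, S_2, ...) (index 0 unused) of pairwise disjoint subsets of [n]
  with union [n] and |S_i| = r_i for i \<ge> 1.\<close>
definition V :: "(nat \<Rightarrow> nat) \<Rightarrow> (nat \<Rightarrow> nat set) set" where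
  "V r = {S. (\<forall>i\<ge>1. S i \<subseteq> {1..n_of r} \<and> card (S i) = r i) \<and>
             (\<forall>i\<ge>1. \<forall>j\<ge>1. i \<noteq> j \<longrightarrow> S i \<inter> S j = {}) \<and>
             (\<Union>i\<in>{i. 1 \<le> i}. S i) = {1..n_of r}}"

definition CF_S :: "(nat \<Rightarrow> nat) \<Rightarrow> nat \<Rightarrow> (nat \<Rightarrow> nat set) \<Rightarrow> ctree list set" where
  "CF_S r k S = {F \<in> CF r k. \<forall>t \<in> set F. labels_in S t}"

end

theory Submission
  imports Defs "HOL-Library.Multiset" "HOL-Combinatorics.Permutations"
begin



abbreviation sw :: "nat \<Rightarrow> nat \<Rightarrow> nat" where "sw i \<equiv> Transposition.transpose i (Suc i)"

fun swapt :: "nat \<Rightarrow> ctree \<Rightarrow> ctree" where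
  "swapt i Leaf = Leaf"
| "swapt i (Inner l c ts) = Inner (sw i l) c (map (swapt i) ts)"

fun nodes :: "ctree \<Rightarrow> (nat \<times> nat) multiset" where
  "nodes Leaf = {#}"
| "nodes (Inner l c ts) = add_mset (l, length ts) (sum_list (map nodes ts))"

fun nleaves :: "ctree \<Rightarrow> nat" where
  "nleaves Leaf = 1"
| "nleaves (Inner l c ts) = sum_list (map nleaves ts)"

fun isSCol :: "color \<Rightarrow> bool" where
  "isSCol (SCol _) = True" | "isSCol (Col _) = False"

fun colnum :: "color \<Rightarrow> nat" where
  "colnum (SCol j) = j" | "colnum (Col j) = j"

definition special :: "nat \<Rightarrow> nat \<Rightarrow> color \<Rightarrow> ctree list \<Rightarrow> bool" where
  "special i l c ts \<longleftrightarrow> l = Suc i \<and> isSCol c \<and> i \<in> set (labels (Inner l c ts)) \<and>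
     (\<forall>m \<in> set (labels (Inner l c ts)). i \<le> m)"

fun hasspec :: "nat \<Rightarrow> ctree \<Rightarrow> bool" where
  "hasspec i Leaf = False"
| "hasspec i (Inner l c ts) = (special i l c ts \<or> (\<exists>t \<in> set ts. hasspec i t))"

fun pick :: "ctree list \<Rightarrow> ctree" where
  "pick [] = Leaf"
| "pick (t # ts) = (if t = Leaf then pick ts else t)"

fun subt :: "nat \<Rightarrow> ctree \<Rightarrow> ctree" where
  "subt x Leaf = Leaf"
| "subt x (Inner l c ts) = (if l = x then Inner l c ts else pick (map (subt x) ts))"

fun repl :: "nat \<Rightarrow> ctree \<Rightarrow> ctree \<Rightarrow> ctree" where
  "repl x t' Leaf = Leaf"
| "repl x t' (Inner l c ts) = (if l = x then t' else Inner l c (map (repl x t') ts))"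

definition idx :: "nat \<Rightarrow> ctree list \<Rightarrow> nat" where
  "idx x ts = length (takeWhile (\<lambda>t. x \<notin> set (labels t)) ts)"

definition restructure :: "nat \<Rightarrow> nat \<Rightarrow> color \<Rightarrow> ctree list \<Rightarrow> ctree" where
  "restructure i l c us = (let c0 = idx i us in
     (case subt i (us ! c0) of Leaf \<Rightarrow> Inner l c us
      | Inner _ cl ls \<Rightarrow> (let j0 = colnum cl - 1;
            L' = Inner i (Col (Suc c0)) (us[c0 := ls ! j0]) in
            Inner l c (ls[j0 := repl i L' (us ! c0)]))))"

fun restr :: "nat \<Rightarrow> ctree \<Rightarrow> ctree" where
  "restr i Leaf = Leaf"
| "restr i (Inner l c ts) = (if special i l c ts then restructure i l c ts else Inner l c (map (restr i) ts))"

definition phi :: "nat \<Rightarrow> ctree \<Rightarrow> ctree" where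
  "phi i t = (if hasspec i t then restr i t else swapt i t)"

lemma labels_col: "labels (Inner l c ts) = labels (Inner l c' ts)" by simp

lemma proper_root_iff: "proper_root l ts \<longleftrightarrow> (\<forall>m \<in> set (labels (Inner l c ts)). \<not> m < l)"
  unfolding proper_root_def by simp

lemma image_mset_sum_list: "image_mset f (sum_list (map g ts)) = sum_list (map (\<lambda>t. image_mset f (g t)) ts)"
  by (induction ts) auto

lemma mset_labels: "mset (labels t) = image_mset fst (nodes t)"
  by (induction t) (auto simp: mset_concat image_mset_sum_list comp_def intro!: arg_cong[where f=sum_list])

lemma set_labels: "set (labels t) = fst ` set_mset (nodes t)"
  by (metis mset_labels set_image_mset set_mset_mset)

lemma nleaves_nodes: "nleaves t + size (nodes t) = 1 + sum_mset (image_mset snd (nodes t))"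
proof (induction t)
  case Leaf then show ?case by simp
next
  case (Inner l c ts)
  have "\<forall>t\<in>set ts. nleaves t + size (nodes t) = 1 + sum_mset (image_mset snd (nodes t))"
    using Inner by auto
  then have "sum_list (map nleaves ts) + size (sum_list (map nodes ts)) = length ts + sum_mset (image_mset snd (sum_list (map nodes ts)))"
    by (induction ts) (auto simp: size_union)
  then show ?case by simp
qed

lemma degcount_nodes: "degcount d t = (if d = 0 then nleaves t else 0) + count (image_mset snd (nodes t)) d"
proof (induction t)
  case Leaf then show ?case by simp
next
  case (Inner l c ts)
  have "\<forall>t\<in>set ts. degcount d t = (if d = 0 then nleaves t else 0) + count (image_mset snd (nodes t)) d"
    using Inner by auto
  then have "sum_list (map (degcount d) ts) = (if d = 0 then sum_list (map nleaves ts) else 0) + count (image_mset snd (sum_list (map nodes ts))) d"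
    by (induction ts) auto
  then show ?case by simp
qed

lemma labels_in_nodes: "labels_in S t \<longleftrightarrow> (\<forall>p \<in># nodes t. fst p \<in> S (snd p))"
proof (induction t)
  case Leaf then show ?case by simp
next
  case (Inner l c ts)
  have e: "set_mset (sum_list (map nodes ts)) = (\<Union>t\<in>set ts. set_mset (nodes t))"
    by (induction ts) auto
  show ?case using Inner by (auto simp: e)
qed

lemma child_labels: "t \<in> set ts \<Longrightarrow> set (labels t) \<subseteq> set (labels (Inner l c ts))"
  by auto

lemma child_distinct: "distinct (labels (Inner l c ts)) \<Longrightarrow> t \<in> set ts \<Longrightarrow> distinct (labels t)"
  by (auto simp: distinct_concat_iff)

lemma concat_disj: "distinct (concat (map labels ts)) \<Longrightarrow> t1 \<in> set ts \<Longrightarrow> t2 \<in> set ts \<Longrightarrow>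
   x \<in> set (labels t1) \<Longrightarrow> x \<in> set (labels t2) \<Longrightarrow> t1 = t2"
  by (induction ts) auto




lemma pick_mem: "pick xs \<in> insert Leaf (set xs)"
  by (induction xs) auto

lemma pick_eq: "y \<noteq> Leaf \<Longrightarrow> y \<in> set xs \<Longrightarrow> (\<forall>z\<in>set xs. z = Leaf \<or> z = y) \<Longrightarrow> pick xs = y"
  by (induction xs) auto

lemma pick_Leaf: "(\<forall>z\<in>set xs. z = Leaf) \<Longrightarrow> pick xs = Leaf"
  by (induction xs) auto

lemma subt_notin: "x \<notin> set (labels t) \<Longrightarrow> subt x t = Leaf"
proof (induction t)
  case (Inner l c ts) then show ?case by (auto intro!: pick_Leaf)
qed simp

lemma repl_notin: "x \<notin> set (labels t) \<Longrightarrow> repl x t' t = t"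
proof (induction t)
  case (Inner l c ts) then show ?case by (auto intro!: map_idI)
qed simp

lemma subt_in: "x \<in> set (labels t) \<Longrightarrow> \<exists>c ls. subt x t = Inner x c ls"
proof (induction t)
  case Leaf then show ?case by simp
next
  case (Inner l c ts)
  show ?case
  proof (cases "l = x")
    case True then show ?thesis by simp
  next
    case False
    then obtain t0 where t0: "t0 \<in> set ts" "x \<in> set (labels t0)" using Inner.prems by auto
    then obtain c' ls where e: "subt x t0 = Inner x c' ls" using Inner.IH by blast
    have "pick (map (subt x) ts) \<noteq> Leaf"
    proof
      assume "pick (map (subt x) ts) = Leaf"
      moreover have "\<And>xs. Inner x c' ls \<in> set xs \<Longrightarrow> pick xs \<noteq> Leaf"
      proof -
        fix xs :: "ctree list" show "Inner x c' ls \<in> set xs \<Longrightarrow> pick xs \<noteq> Leaf"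
          by (induction xs) auto
      qed
      ultimately show False using t0 e by (metis image_eqI list.set_map)
    qed
    then obtain z where z: "z \<in> set ts" "pick (map (subt x) ts) = subt x z" "subt x z \<noteq> Leaf"
      using pick_mem[of "map (subt x) ts"] by auto
    then have "x \<in> set (labels z)" using subt_notin by blast
    then show ?thesis using z Inner.IH False by auto
  qed
qed

lemma subt_props: "(wf_col k t \<longrightarrow> wf_col k (subt x t)) \<and> set (labels (subt x t)) \<subseteq> set (labels t)
   \<and> (distinct (labels t) \<longrightarrow> distinct (labels (subt x t)))"
proof (induction t)
  case Leaf then show ?case by simp
next
  case (Inner l c ts)
  show ?case
  proof (cases "l = x")
    case True then show ?thesis by simp
  next
    case False
    have "pick (map (subt x) ts) \<in> insert Leaf (subt x ` set ts)" using pick_mem[of "map (subt x) ts"] by simp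
    then obtain z where z: "pick (map (subt x) ts) = Leaf \<or> (z \<in> set ts \<and> pick (map (subt x) ts) = subt x z)" by blast
    show ?thesis
    proof (cases "pick (map (subt x) ts) = Leaf")
      case True then show ?thesis using False by simp
    next
      case nl: False
      then have zz: "z \<in> set ts" "pick (map (subt x) ts) = subt x z" using z by auto
      have "wf_col k (Inner l c ts) \<longrightarrow> wf_col k z" using zz by simp
      moreover have "set (labels z) \<subseteq> set (labels (Inner l c ts))" using zz by auto
      moreover have "distinct (labels (Inner l c ts)) \<longrightarrow> distinct (labels z)" using zz child_distinct by blast
      ultimately show ?thesis using Inner.IH[OF zz(1)] zz False by auto
    qed
  qed
qed




lemma repl_in_labels: "x \<in> set (labels t) \<Longrightarrow> x \<in> set (labels t') \<Longrightarrow> x \<in> set (labels (repl x t' t))"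
proof (induction t)
  case (Inner l c ts) then show ?case by (cases "l = x") auto
qed simp

lemma repl_repl: "repl x a (repl x (Inner x c' ts') t) = repl x a t"
proof (induction t)
  case (Inner l c ts) then show ?case by auto
qed simp




lemma subt_repl: "x \<in> set (labels t) \<Longrightarrow> subt x (repl x (Inner x c' ts') t) = Inner x c' ts'"
proof (induction t)
  case Leaf then show ?case by simp
next
  case (Inner l c ts)
  show ?case
  proof (cases "l = x")
    case True then show ?thesis by simp
  next
    case False
    then obtain t0 where t0: "t0 \<in> set ts" "x \<in> set (labels t0)" using Inner.prems by auto
    have "pick (map (subt x \<circ> repl x (Inner x c' ts')) ts) = Inner x c' ts'"
    proof (rule pick_eq)
      show "Inner x c' ts' \<in> set (map (subt x \<circ> repl x (Inner x c' ts')) ts)"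
      proof -
        have "(subt x \<circ> repl x (Inner x c' ts')) t0 = Inner x c' ts'" using t0 Inner.IH by simp
        then show ?thesis using t0 by (metis image_eqI list.set_map)
      qed
      show "\<forall>z\<in>set (map (subt x \<circ> repl x (Inner x c' ts')) ts). z = Leaf \<or> z = Inner x c' ts'"
      proof
        fix z assume "z \<in> set (map (subt x \<circ> repl x (Inner x c' ts')) ts)"
        then obtain u where u: "u \<in> set ts" "z = subt x (repl x (Inner x c' ts') u)" by auto
        show "z = Leaf \<or> z = Inner x c' ts'"
        proof (cases "x \<in> set (labels u)")
          case True then show ?thesis using u Inner.IH by simp
        next
          case False then show ?thesis using u by (simp add: repl_notin subt_notin)
        qed
      qed
    qed simp
    then show ?thesis using False by simp
  qed
qed




lemma repl_subt: "distinct (labels t) \<Longrightarrow> repl x (subt x t) t = t"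
proof (induction t)
  case Leaf then show ?case by simp
next
  case (Inner l c ts)
  show ?case
  proof (cases "l = x")
    case True then show ?thesis by simp
  next
    case False
    have "repl x (pick (map (subt x) ts)) t0 = t0" if t0: "t0 \<in> set ts" for t0
    proof (cases "x \<in> set (labels t0)")
      case True
      have dc: "distinct (concat (map labels ts))" using Inner.prems by simp
      have "pick (map (subt x) ts) = subt x t0"
        apply (rule pick_eq)
        using True t0 subt_in[OF True] apply auto[2]
        using concat_disj[OF dc _ t0 _ True] subt_notin by auto
      then show ?thesis using Inner.IH t0 child_distinct[OF Inner.prems t0] by simp
    next
      case False then show ?thesis by (simp add: repl_notin)
    qed
    then show ?thesis using False by (auto intro!: map_idI)
  qed
qed




lemma repl_nodes: "distinct (labels t) \<Longrightarrow>
  nodes (repl x t' t) + nodes (subt x t) = nodes t + (if x \<in> set (labels t) then nodes t' else {#})"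
proof (induction t)
  case Leaf then show ?case by simp
next
  case (Inner l c ts)
  show ?case
  proof (cases "l = x")
    case True then show ?thesis by simp
  next
    case False
    have dc: "distinct (concat (map labels ts))" using Inner.prems by simp
    have IH: "\<forall>t\<in>set ts. nodes (repl x t' t) + nodes (subt x t) = nodes t + (if x \<in> set (labels t) then nodes t' else {#})"
      using Inner.IH child_distinct[OF Inner.prems] by blast
    have "sum_list (map (\<lambda>t. nodes (repl x t' t)) ts) + nodes (pick (map (subt x) ts))
       = sum_list (map nodes ts) + (if x \<in> set (concat (map labels ts)) then nodes t' else {#})"
      using dc IH
    proof (induction ts)
      case Nil then show ?case by simp
    next
      case (Cons a ts)
      show ?case
      proof (cases "x \<in> set (labels a)")
        case True
        then have "x \<notin> set (concat (map labels ts))" using Cons.prems(1) by auto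
        then have "\<forall>t\<in>set ts. repl x t' t = t \<and> subt x t = Leaf" by (auto simp: repl_notin subt_notin)
        then have "sum_list (map (\<lambda>t. nodes (repl x t' t)) ts) = sum_list (map nodes ts)"
          by (metis (no_types, lifting) map_eq_conv)
        moreover obtain cc ls where "subt x a = Inner x cc ls" using subt_in[OF True] by blast
        ultimately show ?thesis using True Cons.prems(2) by (simp add: add_ac)
      next
        case False
        then show ?thesis using Cons by (simp add: repl_notin subt_notin add_ac)
      qed
    qed
    then show ?thesis using False by (simp add: comp_def)
  qed
qed

lemma wf_repl_low: "wf_col k t \<Longrightarrow> wf_col k t' \<Longrightarrow> x \<in> set (labels t) \<Longrightarrow> x \<in> set (labels t') \<Longrightarrow>
   (\<forall>m \<in> set (labels t). x \<le> m) \<Longrightarrow> wf_col k (repl x t' t)"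
proof (induction t)
  case Leaf then show ?case by simp
next
  case (Inner l c ts)
  show ?case
  proof (cases "l = x")
    case True then show ?thesis using Inner by simp
  next
    case False
    have lx: "x < l" using False Inner.prems(5) by auto
    have ch: "\<forall>t\<in>set ts. wf_col k (repl x t' t)"
    proof
      fix t assume t: "t \<in> set ts"
      show "wf_col k (repl x t' t)"
      proof (cases "x \<in> set (labels t)")
        case True then show ?thesis using Inner t by auto
      next
        case False then show ?thesis using Inner t by (simp add: repl_notin)
      qed
    qed
    have "x \<in> set (labels (repl x t' (Inner l c ts)))" using repl_in_labels Inner.prems by blast
    then have np: "\<not> proper_root l (map (repl x t') ts)" using False lx unfolding proper_root_def by auto
    show ?thesis using Inner.prems(1) False ch np by auto
  qed
qed




lemma sw_sw[simp]: "sw i (sw i m) = m" by (simp add: transpose_def)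

lemma swapt_swapt: "swapt i (swapt i t) = t"
  by (induction t) (auto intro!: map_idI)

lemma labels_swapt: "labels (swapt i t) = map (sw i) (labels t)"
  by (induction t) (auto simp: map_concat comp_def intro!: arg_cong[where f=concat])

lemma nodes_swapt: "nodes (swapt i t) = image_mset (apfst (sw i)) (nodes t)"
  by (induction t) (auto simp: image_mset_sum_list comp_def intro!: arg_cong[where f=sum_list])

lemma swapt_wf: "wf_col k t \<Longrightarrow> \<not> hasspec i t \<Longrightarrow> wf_col k (swapt i t)"
proof (induction t)
  case Leaf then show ?case by simp
next
  case (Inner l c ts)
  have ns: "\<not> special i l c ts" using Inner.prems by simp
  have ch: "\<forall>t\<in>set ts. wf_col k (swapt i t)" using Inner by auto
  have key: "\<not> proper_root (sw i l) (map (swapt i) ts)" if np: "\<not> proper_root l ts" and sc: "isSCol c"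
  proof -
    let ?A = "set (labels (Inner l c ts))"
    obtain m where m: "m \<in> ?A" "m < l" using np by (auto simp: proper_root_def)
    have lA: "l \<in> ?A" by simp
    have "\<exists>m' \<in> ?A. sw i m' < sw i l"
    proof (cases "l = Suc i")
      case True
      show ?thesis
      proof (cases "\<exists>m' \<in> ?A. m' < i")
        case True
        then obtain m' where "m' \<in> ?A" "m' < i" by blast
        then have "sw i m' < sw i l" using \<open>l = Suc i\<close> by (auto simp: transpose_def)
        then show ?thesis using \<open>m' \<in> ?A\<close> by blast
      next
        case False
        then have "\<not> m < i" using m(1) by blast
        then have "m = i" using m True by simp
        then have "special i l c ts" using True False m sc unfolding special_def by (auto simp: not_less)
        then show ?thesis using ns by simp
      qed
    next
      case False
      then have "sw i m < sw i l" using m(2) by (auto simp: transpose_def)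
      then show ?thesis using m(1) by blast
    qed
    then obtain m' where "m' \<in> ?A" "sw i m' < sw i l" by blast
    moreover have "sw i m' \<in> set (labels (Inner (sw i l) (Col 0) (map (swapt i) ts)))"
      using labels_swapt[of i "Inner l (Col 0) ts"] \<open>m' \<in> ?A\<close> by (metis image_eqI labels_col list.set_map swapt.simps(2))
    ultimately show ?thesis unfolding proper_root_def by blast
  qed
  have "c \<in> {Col j | j. 1 \<le> j \<and> j \<le> length ts} \<or> (\<not> proper_root l ts \<and> c \<in> {SCol j | j. 1 \<le> j \<and> j \<le> k})"
    using Inner.prems(1) by simp
  then have "c \<in> {Col j | j. 1 \<le> j \<and> j \<le> length ts} \<or> (\<not> proper_root (sw i l) (map (swapt i) ts) \<and> c \<in> {SCol j | j. 1 \<le> j \<and> j \<le> k})"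
    using key by auto
  then show ?case using ch Inner.prems(1) by simp
qed

lemma swapt_nospec: "wf_col k t \<Longrightarrow> \<not> hasspec i (swapt i t)"
proof (induction t)
  case Leaf then show ?case by simp
next
  case (Inner l c ts)
  have "\<not> special i (sw i l) c (map (swapt i) ts)"
  proof
    assume sp: "special i (sw i l) c (map (swapt i) ts)"
    have ls: "labels (Inner (sw i l) c (map (swapt i) ts)) = map (sw i) (labels (Inner l c ts))"
      using labels_swapt[of i "Inner l c ts"] by simp
    have li: "l = i" using sp unfolding special_def by (auto simp: transpose_def split: if_splits)
    have all: "\<forall>m \<in> set (labels (Inner l c ts)). i \<le> m"
    proof
      fix m assume "m \<in> set (labels (Inner l c ts))"
      then have "i \<le> sw i m" using sp ls unfolding special_def by (metis image_eqI list.set_map)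
      then show "i \<le> m" by (auto simp: transpose_def split: if_splits)
    qed
    then have "proper_root l ts" using li unfolding proper_root_def by (metis labels_col not_less)
    then have "c \<in> {Col j | j. 1 \<le> j \<and> j \<le> length ts}" using Inner.prems by auto
    then show False using sp unfolding special_def by auto
  qed
  then show ?case using Inner by auto
qed




lemma concat_disj_idx: "distinct (concat (map labels ts)) \<Longrightarrow> m < length ts \<Longrightarrow> m' < length ts \<Longrightarrow>
   x \<in> set (labels (ts ! m)) \<Longrightarrow> x \<in> set (labels (ts ! m')) \<Longrightarrow> m = m'"
proof (induction ts arbitrary: m m')
  case Nil then show ?case by simp
next
  case (Cons a ts)
  show ?case
  proof (cases m)
    case 0
    then show ?thesis using Cons by (cases m') (use nth_mem in \<open>fastforce simp: disjoint_iff\<close>)+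
  next
    case (Suc p)
    then show ?thesis using Cons by (cases m') (use nth_mem in \<open>fastforce simp: disjoint_iff\<close>)+
  qed
qed

lemma length_takeWhile_less: "\<exists>x\<in>set xs. \<not> P x \<Longrightarrow> length (takeWhile P xs) < length xs"
  by (induction xs) auto

lemma sum_list_update: "n < length xs \<Longrightarrow>
   sum_list (map f (xs[n := y])) + f (xs ! n) = sum_list (map f xs) + (f y :: 'b :: comm_monoid_add)"
proof (induction xs arbitrary: n)
  case Nil then show ?case by simp
next
  case (Cons a xs)
  then show ?case by (cases n) (auto simp: add_ac)
qed

lemma nodes_sub_sum: "t \<in> set ts \<Longrightarrow> nodes t \<subseteq># sum_list (map nodes ts)"
  by (induction ts) (auto simp: subset_mset.add_increasing2 subset_mset.add_increasing)

lemma restructure_props: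
  assumes sp: "special i l c us" and wf: "wf_col k (Inner l c us)" and dl: "distinct (labels (Inner l c us))"
  shows "\<exists>vs. restructure i l c us = Inner l c vs \<and> special i l c vs \<and> wf_col k (Inner l c vs)
     \<and> nodes (Inner l c vs) = image_mset (apfst (sw i)) (nodes (Inner l c us))
     \<and> restructure i l c vs = Inner l c us"
proof -
  have l: "l = Suc i" and sc: "isSCol c" and iU: "i \<in> set (labels (Inner l c us))"
    and ge: "\<forall>m\<in>set (labels (Inner l c us)). i \<le> m" using sp unfolding special_def by auto
  have iC: "i \<in> set (concat (map labels us))" using iU l by auto
  have dc: "distinct (concat (map labels us))" using dl by simp
  define c0 where "c0 = idx i us"
  have c0l: "c0 < length us" unfolding c0_def idx_def
    by (rule length_takeWhile_less) (use iC in auto)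
  have iT: "i \<in> set (labels (us ! c0))"
    using nth_length_takeWhile[OF c0l[unfolded c0_def idx_def]] unfolding c0_def idx_def by simp
  define T where "T = us ! c0"
  have Tin: "T \<in> set us" using c0l T_def by simp
  have wfT: "wf_col k T" using wf Tin by simp
  have dT: "distinct (labels T)" using child_distinct[OF dl Tin] .
  have lT: "set (labels T) \<subseteq> set (labels (Inner l c us))" using Tin by auto
  obtain cl ls where L: "subt i T = Inner i cl ls" using subt_in iT T_def by blast
  have wfL: "wf_col k (Inner i cl ls)" and lL: "set (labels (Inner i cl ls)) \<subseteq> set (labels T)"
    and dL: "distinct (labels (Inner i cl ls))"
    using subt_props[of k T i] wfT dT L by auto
  have pr: "proper_root i ls" unfolding proper_root_def using ge lL lT by (auto simp: not_less)
  have lsne: "ls \<noteq> []" using wfL by simp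
  obtain j where cl: "cl = Col j" "1 \<le> j" "j \<le> length ls" using wfL pr by auto
  define j0 where "j0 = j - 1"
  have j0: "j0 < length ls" "Suc j0 = j" using cl j0_def by auto
  have noi: "\<forall>t\<in>set ls. i \<notin> set (labels t)" using dL by auto
  define L' where "L' = Inner i (Col (Suc c0)) (us[c0 := ls ! j0])"
  define T' where "T' = repl i L' T"
  define vs where "vs = ls[j0 := T']"
  have R: "restructure i l c us = Inner l c vs"
    unfolding restructure_def Let_def c0_def[symmetric] T_def[symmetric] L vs_def T'_def L'_def j0_def cl by simp
  have iL': "i \<in> set (labels L')" unfolding L'_def by simp
  have iT': "i \<in> set (labels T')" unfolding T'_def using repl_in_labels iT iL' T_def by blast
  have T'vs: "T' \<in> set vs" unfolding vs_def using j0 by (simp add: set_update_memI)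
  have lvs: "length vs = length ls" unfolding vs_def by simp
  let ?X = "sum_list (map nodes us)"
  have E1: "nodes T' + nodes (Inner i cl ls) = nodes T + nodes L'"
    using repl_nodes[OF dT, of i L'] iT T_def L T'_def by simp
  have E2: "sum_list (map nodes (us[c0 := ls ! j0])) + nodes T = ?X + nodes (ls ! j0)"
    using sum_list_update[OF c0l] T_def by metis
  have E3: "sum_list (map nodes vs) + nodes (ls ! j0) = sum_list (map nodes ls) + nodes T'"
    using sum_list_update[OF j0(1)] vs_def by metis
  have E0: "nodes (repl i Leaf T) + nodes (Inner i cl ls) = nodes T"
    using repl_nodes[OF dT, of i Leaf] iT T_def L by simp
  have "(i, length ls) \<in># nodes (Inner i cl ls)" by simp
  moreover have "nodes (Inner i cl ls) \<subseteq># nodes T" using E0 by (metis mset_subset_eq_add_right)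
  moreover have "nodes T \<subseteq># ?X" using nodes_sub_sum[OF Tin] .
  ultimately have inX: "(i, length ls) \<in># ?X" by (meson mset_subset_eqD)
  define X0 where "X0 = ?X - {#(i, length ls)#}"
  have X: "?X = add_mset (i, length ls) X0" unfolding X0_def using inX by simp
  have Svs: "sum_list (map nodes vs) = add_mset (i, length us) X0"
  proof -
    have nL: "nodes (Inner i cl ls) = add_mset (i, length ls) (sum_list (map nodes ls))" by simp
    have nL': "nodes L' = add_mset (i, length us) (sum_list (map nodes (us[c0 := ls ! j0])))"
      unfolding L'_def by simp
    show ?thesis
    proof (rule multiset_eqI)
      fix p
      have a: "count (nodes T') p + count (nodes (Inner i cl ls)) p = count (nodes T) p + count (nodes L') p"
        using arg_cong[OF E1, of "\<lambda>M. count M p"] by (simp only: count_union add_mset_add_single)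
      have b: "count (sum_list (map nodes (us[c0 := ls ! j0]))) p + count (nodes T) p = count ?X p + count (nodes (ls ! j0)) p"
        using arg_cong[OF E2, of "\<lambda>M. count M p"] by (simp only: count_union add_mset_add_single)
      have c: "count (sum_list (map nodes vs)) p + count (nodes (ls ! j0)) p = count (sum_list (map nodes ls)) p + count (nodes T') p"
        using arg_cong[OF E3, of "\<lambda>M. count M p"] by (simp only: count_union add_mset_add_single)
      have d: "count (nodes (Inner i cl ls)) p = (if p = (i, length ls) then 1 else 0) + count (sum_list (map nodes ls)) p"
        by simp
      have e: "count (nodes L') p = (if p = (i, length us) then 1 else 0) + count (sum_list (map nodes (us[c0 := ls ! j0]))) p"
        unfolding nL' by simp
      have f: "count ?X p = (if p = (i, length ls) then 1 else 0) + count X0 p"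
        unfolding X by simp
      have g: "count (sum_list (map nodes vs)) p = (if p = (i, length us) then 1 else 0) + count X0 p"
        using a b c d e f by linarith
      show "count (sum_list (map nodes vs)) p = count (add_mset (i, length us) X0) p"
        unfolding g by simp
    qed
  qed
  have nU: "nodes (Inner l c us) = add_mset (Suc i, length us) (add_mset (i, length ls) X0)"
    using X l by simp
  have nU': "nodes (Inner l c vs) = add_mset (Suc i, length ls) (add_mset (i, length us) X0)"
    using Svs l lvs by simp
  have X0lab: "\<forall>p\<in>#X0. fst p \<noteq> i \<and> fst p \<noteq> Suc i"
  proof -
    define M where "M = mset (labels (Inner l c us))"
    have "image_mset fst (nodes (Inner l c us)) = M" unfolding M_def by (rule mset_labels[symmetric])
    then have m: "add_mset (Suc i) (add_mset i (image_mset fst X0)) = M"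
      unfolding nU by (simp only: image_mset_add_mset fst_conv)
    have "\<forall>x. count M x \<le> 1"
    proof
      fix x
      have cM: "\<forall>a. count M a = (if a \<in> set (labels (Inner l c us)) then 1 else 0)"
        using dl unfolding M_def distinct_count_atmost_1 .
      show "count M x \<le> 1" using cM[rule_format, of x] by simp
    qed
    then have "count M i \<le> 1" "count M (Suc i) \<le> 1" by auto
    then have "count (image_mset fst X0) i = 0" "count (image_mset fst X0) (Suc i) = 0"
      unfolding m[symmetric] by auto
    then show ?thesis by (metis count_eq_zero_iff image_eqI set_image_mset)
  qed
  have X0im: "image_mset (apfst (sw i)) X0 = X0"
  proof -
    have "image_mset (apfst (sw i)) X0 = image_mset id X0"
      by (rule image_mset_cong) (use X0lab in \<open>auto simp: transpose_def apfst_def map_prod_def split: prod.splits\<close>)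
    then show ?thesis by simp
  qed
  have NODES: "nodes (Inner l c vs) = image_mset (apfst (sw i)) (nodes (Inner l c us))"
    using nU nU' X0im by simp
  have wfL': "wf_col k L'"
  proof -
    have "set (us[c0 := ls ! j0]) \<subseteq> insert (ls ! j0) (set us)" by (rule set_update_subset_insert)
    moreover have "wf_col k (ls ! j0)" using wfL j0 by simp
    moreover have "\<forall>t\<in>set us. wf_col k t" using wf by simp
    ultimately show ?thesis unfolding L'_def using c0l by auto
  qed
  have wfT': "wf_col k T'" unfolding T'_def
    by (rule wf_repl_low[OF wfT wfL' iT[folded T_def] iL']) (use ge lT in auto)
  have scol: "c \<in> {SCol j | j. 1 \<le> j \<and> j \<le> k}" using wf sc by auto
  have npU': "\<not> proper_root l vs" unfolding proper_root_def using iT' T'vs l by auto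
  have chvs: "\<forall>t\<in>set vs. wf_col k t"
  proof
    fix t assume "t \<in> set vs"
    then have "t \<in> insert T' (set ls)" using set_update_subset_insert vs_def by fastforce
    then show "wf_col k t" using wfT' wfL by auto
  qed
  have WF: "wf_col k (Inner l c vs)" using chvs npU' scol lsne lvs by (auto simp: vs_def)
  have setU': "set (labels (Inner l c vs)) = sw i ` set (labels (Inner l c us))"
    unfolding set_labels NODES by (simp add: image_image)
  have SP: "special i l c vs" unfolding special_def
  proof (intro conjI)
    show "l = Suc i" "isSCol c" by (fact l, fact sc)
    show "i \<in> set (labels (Inner l c vs))" using iT' T'vs by auto
    show "\<forall>m\<in>set (labels (Inner l c vs)). i \<le> m"
      unfolding setU' using ge by (auto simp: transpose_def)
  qed
  have idx2: "idx i vs = j0"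
  proof -
    have "takeWhile (\<lambda>t. i \<notin> set (labels t)) vs = take j0 vs"
    proof (rule takeWhile_eq_take_P_nth)
      fix m assume "m < j0" "m < length vs"
      then show "i \<notin> set (labels (vs ! m))" using noi j0 unfolding vs_def by simp
    next
      show "j0 < length vs \<Longrightarrow> \<not> i \<notin> set (labels (vs ! j0))" using iT' j0 unfolding vs_def by simp
    qed
    then show ?thesis unfolding idx_def using j0 lvs by simp
  qed
  have vsj0: "vs ! j0 = T'" using j0 vs_def by simp
  have sT': "subt i T' = L'" unfolding T'_def L'_def using subt_repl iT T_def by blast
  have upd: "vs[j0 := (us[c0 := ls ! j0]) ! c0] = ls" using c0l j0 unfolding vs_def by simp
  have rr: "repl i (Inner i cl ls) T' = T" unfolding T'_def L'_def
    using repl_repl repl_subt[OF dT, of i] L by metis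
  have "restructure i l c vs = Inner l c ((us[c0 := ls ! j0])[c0 := repl i (Inner i (Col (Suc j0)) ls) T'])"
    unfolding restructure_def Let_def idx2 vsj0 sT' using upd by (simp add: L'_def)
  also have "\<dots> = Inner l c us" using rr j0 cl T_def by simp
  finally have INV: "restructure i l c vs = Inner l c us" .
  show ?thesis using R SP WF NODES INV by blast
qed




lemma hasspec_labels: "hasspec i t \<Longrightarrow> i \<in> set (labels t) \<and> Suc i \<in> set (labels t)"
proof (induction t)
  case (Inner l c ts) then show ?case by (cases "special i l c ts") (auto simp: special_def)
qed simp

lemma restr_nospec: "\<not> hasspec i t \<Longrightarrow> restr i t = t"
proof (induction t)
  case (Inner l c ts) then show ?case by (auto intro!: map_idI)
qed simp

lemma image_id_nolab: "i \<notin> set (labels t) \<Longrightarrow> Suc i \<notin> set (labels t) \<Longrightarrow>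
  image_mset (apfst (sw i)) (nodes t) = nodes t"
proof -
  assume a: "i \<notin> set (labels t)" "Suc i \<notin> set (labels t)"
  have "image_mset (apfst (sw i)) (nodes t) = image_mset id (nodes t)"
  proof (rule image_mset_cong)
    fix p assume "p \<in># nodes t"
    then have "fst p \<in> set (labels t)" unfolding set_labels by auto
    then have "fst p \<noteq> i" "fst p \<noteq> Suc i" using a by auto
    then show "apfst (sw i) p = id p" by (cases p) (simp add: transpose_def)
  qed
  then show ?thesis by simp
qed

lemma sw_set: "i \<in> A \<Longrightarrow> Suc i \<in> A \<Longrightarrow> sw i ` A = A"
proof -
  assume a: "i \<in> A" "Suc i \<in> A"
  have m: "sw i x \<in> A" if "x \<in> A" for x using a that by (simp add: transpose_def)
  show ?thesis
  proof
    show "sw i ` A \<subseteq> A" using m by blast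
    show "A \<subseteq> sw i ` A" using m by (metis image_eqI subsetI sw_sw)
  qed
qed

lemma set_labels_image: "nodes t' = image_mset (apfst (sw i)) (nodes t) \<Longrightarrow> set (labels t') = sw i ` set (labels t)"
  unfolding set_labels by (simp add: image_image)

lemma restr_props: "wf_col k t \<Longrightarrow> distinct (labels t) \<Longrightarrow> hasspec i t \<Longrightarrow>
  nodes (restr i t) = image_mset (apfst (sw i)) (nodes t) \<and> wf_col k (restr i t) \<and> hasspec i (restr i t)
   \<and> restr i (restr i t) = t"
proof (induction t)
  case Leaf then show ?case by simp
next
  case (Inner l c ts)
  show ?case
  proof (cases "special i l c ts")
    case True
    obtain vs where v: "restructure i l c ts = Inner l c vs" "special i l c vs" "wf_col k (Inner l c vs)"
      "nodes (Inner l c vs) = image_mset (apfst (sw i)) (nodes (Inner l c ts))"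
      "restructure i l c vs = Inner l c ts"
      using restructure_props[OF True Inner.prems(1,2)] by blast
    have r: "restr i (Inner l c ts) = Inner l c vs" using True v(1) by simp
    show ?thesis unfolding r using v by simp
  next
    case False
    obtain t0 where t0: "t0 \<in> set ts" "hasspec i t0" using Inner.prems(3) False by auto
    have dc: "distinct (concat (map labels ts))" using Inner.prems(2) by simp
    have lab0: "i \<in> set (labels t0)" "Suc i \<in> set (labels t0)" using hasspec_labels[OF t0(2)] by auto
    have oth: "\<forall>t\<in>set ts. \<not> hasspec i t \<longrightarrow> i \<notin> set (labels t) \<and> Suc i \<notin> set (labels t)"
      using concat_disj[OF dc] t0 lab0 by metis
    have lnot: "l \<noteq> i" "l \<noteq> Suc i" using Inner.prems(2) t0(1) lab0 by auto
    have ch: "\<forall>t\<in>set ts. nodes (restr i t) = image_mset (apfst (sw i)) (nodes t) \<and> wf_col k (restr i t) \<and> restr i (restr i t) = t"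
    proof
      fix t assume t: "t \<in> set ts"
      show "nodes (restr i t) = image_mset (apfst (sw i)) (nodes t) \<and> wf_col k (restr i t) \<and> restr i (restr i t) = t"
      proof (cases "hasspec i t")
        case True
        then show ?thesis using Inner.IH[OF t] Inner.prems(1) t child_distinct[OF Inner.prems(2) t] by simp
      next
        case False
        then show ?thesis using restr_nospec[OF False] image_id_nolab oth t Inner.prems(1) by simp
      qed
    qed
    have r: "restr i (Inner l c ts) = Inner l c (map (restr i) ts)" using False by simp
    have N: "nodes (Inner l c (map (restr i) ts)) = image_mset (apfst (sw i)) (nodes (Inner l c ts))"
    proof -
      have "sum_list (map (\<lambda>t. nodes (restr i t)) ts) = sum_list (map (\<lambda>t. image_mset (apfst (sw i)) (nodes t)) ts)"
        by (rule arg_cong[where f=sum_list]) (use ch in simp)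
      moreover have "sw i l = l" using lnot by (simp add: transpose_def)
      ultimately show ?thesis by (simp add: image_mset_sum_list comp_def)
    qed
    have iU: "i \<in> set (labels (Inner l c ts))" "Suc i \<in> set (labels (Inner l c ts))" using t0(1) lab0 by auto
    have S: "set (labels (Inner l c (map (restr i) ts))) = set (labels (Inner l c ts))"
      using set_labels_image[OF N] sw_set[OF iU] by simp
    have P: "proper_root l (map (restr i) ts) = proper_root l ts"
      unfolding proper_root_def using S labels_col by metis
    have W: "wf_col k (Inner l c (map (restr i) ts))"
      using Inner.prems(1) P ch by auto
    have "hasspec i (restr i t0)" using t0 Inner.IH Inner.prems(1) child_distinct[OF Inner.prems(2) t0(1)] by simp
    moreover have "restr i t0 \<in> set (map (restr i) ts)" using t0 by simp
    ultimately have H: "hasspec i (Inner l c (map (restr i) ts))" by (meson hasspec.simps(2))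
    have ns: "\<not> special i l c (map (restr i) ts)" using lnot unfolding special_def by simp
    have I: "restr i (Inner l c (map (restr i) ts)) = Inner l c ts"
      using ns ch by (simp add: comp_def map_idI)
    show ?thesis unfolding r using N W H I by blast
  qed
qed

lemma phi_props: "wf_col k t \<Longrightarrow> distinct (labels t) \<Longrightarrow>
  nodes (phi i t) = image_mset (apfst (sw i)) (nodes t) \<and> wf_col k (phi i t) \<and> phi i (phi i t) = t"
proof -
  assume w: "wf_col k t" and d: "distinct (labels t)"
  show ?thesis
  proof (cases "hasspec i t")
    case True
    then show ?thesis using restr_props[OF w d True] unfolding phi_def by simp
  next
    case False
    then show ?thesis using swapt_wf[OF w False] swapt_nospec[OF w] unfolding phi_def
      by (simp add: nodes_swapt swapt_swapt)
  qed
qed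




definition Phi :: "nat \<Rightarrow> ctree list \<Rightarrow> ctree list" where
  "Phi i F = map (phi i) F"

lemma forest_distinct: "distinct (concat (map labels F)) \<Longrightarrow> t \<in> set F \<Longrightarrow> distinct (labels t)"
  by (induction F) auto

lemma nleaves_eq: "image_mset snd (nodes t1) = image_mset snd (nodes t2) \<Longrightarrow> nleaves t1 = nleaves t2"
proof -
  assume a: "image_mset snd (nodes t1) = image_mset snd (nodes t2)"
  have "size (nodes t1) = size (nodes t2)" using arg_cong[OF a, of size] by simp
  then show ?thesis using nleaves_nodes[of t1] nleaves_nodes[of t2] a by simp
qed

lemma Phi_props:
  assumes i: "1 \<le> i" "Suc i \<le> n_of r" and F: "F \<in> CF_S r k S"
  shows "Phi i F \<in> CF_S r k (\<lambda>d. sw i ` S d)" "Phi i (Phi i F) = F"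
proof -
  have wf: "\<forall>t\<in>set F. wf_col k t" and dF: "distinct (forest_labels F)"
    and sF: "set (forest_labels F) = {1..n_of r}" and deg: "\<forall>d. sum_list (map (degcount d) F) = r d"
    and lin: "\<forall>t\<in>set F. labels_in S t"
    using F unfolding CF_S_def CF_def by auto
  have dt: "\<forall>t\<in>set F. distinct (labels t)" using dF forest_distinct unfolding forest_labels_def by blast
  have P: "\<forall>t\<in>set F. nodes (phi i t) = image_mset (apfst (sw i)) (nodes t) \<and> wf_col k (phi i t) \<and> phi i (phi i t) = t"
    using phi_props wf dt by blast
  have ml: "\<forall>t\<in>set F. mset (labels (phi i t)) = image_mset (sw i) (mset (labels t))"
  proof
    fix t assume "t \<in> set F"
    then have "nodes (phi i t) = image_mset (apfst (sw i)) (nodes t)" using P by blast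
    then show "mset (labels (phi i t)) = image_mset (sw i) (mset (labels t))"
      unfolding mset_labels by (simp add: multiset.map_comp comp_def)
  qed
  have M: "mset (forest_labels (Phi i F)) = mset (map (sw i) (forest_labels F))"
  proof -
    have "mset (forest_labels (Phi i F)) = sum_list (map (\<lambda>t. mset (labels (phi i t))) F)"
      unfolding forest_labels_def Phi_def by (simp add: mset_concat comp_def)
    also have "\<dots> = sum_list (map (\<lambda>t. image_mset (sw i) (mset (labels t))) F)"
      by (rule arg_cong[where f=sum_list]) (use ml in simp)
    also have "\<dots> = image_mset (sw i) (mset (forest_labels F))"
      unfolding forest_labels_def by (simp add: mset_concat image_mset_sum_list comp_def)
    finally show ?thesis by simp
  qed
  have inj: "inj_on (sw i) X" for X by (rule inj_onI) (metis sw_sw)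
  have "distinct (map (sw i) (forest_labels F))" using dF inj by (simp only: distinct_map)
  then have D: "distinct (forest_labels (Phi i F))"
    using mset_eq_imp_distinct_iff[OF M] by blast
  have S: "set (forest_labels (Phi i F)) = {1..n_of r}"
  proof -
    have "set (forest_labels (Phi i F)) = set (map (sw i) (forest_labels F))" using arg_cong[OF M, of set_mset] by (simp only: set_mset_mset)
    also have "\<dots> = sw i ` {1..n_of r}" using sF by simp
    also have "\<dots> = {1..n_of r}" using i by (intro sw_set) auto
    finally show ?thesis .
  qed
  have dg: "\<forall>t\<in>set F. \<forall>d. degcount d (phi i t) = degcount d t"
  proof (intro ballI allI)
    fix t d assume t: "t \<in> set F"
    have "image_mset snd (nodes (phi i t)) = image_mset snd (nodes t)"
      using P t by (simp add: multiset.map_comp comp_def)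
    moreover have "nleaves (phi i t) = nleaves t" by (rule nleaves_eq) fact
    ultimately show "degcount d (phi i t) = degcount d t"
      unfolding degcount_nodes by simp
  qed
  have DG: "\<forall>d. sum_list (map (degcount d) (Phi i F)) = r d"
  proof
    fix d
    have "sum_list (map (degcount d) (Phi i F)) = sum_list (map (degcount d) F)"
      unfolding Phi_def by (rule arg_cong[where f=sum_list]) (use dg in simp)
    then show "sum_list (map (degcount d) (Phi i F)) = r d" using deg by simp
  qed
  have LI: "\<forall>t\<in>set (Phi i F). labels_in (\<lambda>d. sw i ` S d) t"
  proof
    fix t' assume "t' \<in> set (Phi i F)"
    then obtain t where t: "t \<in> set F" "t' = phi i t" unfolding Phi_def by auto
    show "labels_in (\<lambda>d. sw i ` S d) t'"
      unfolding labels_in_nodes t(2) using P t lin labels_in_nodes by auto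
  qed
  have WF: "\<forall>t\<in>set (Phi i F). wf_col k t" using P unfolding Phi_def by auto
  show "Phi i F \<in> CF_S r k (\<lambda>d. sw i ` S d)"
    unfolding CF_S_def CF_def using WF D S DG LI by blast
  show "Phi i (Phi i F) = F" unfolding Phi_def using P by (simp add: comp_def map_idI)
qed

lemma card_swap:
  assumes i: "1 \<le> i" "Suc i \<le> n_of r"
  shows "card (CF_S r k S) = card (CF_S r k (\<lambda>d. sw i ` S d))"
proof -
  have SS: "(\<lambda>d. sw i ` (sw i ` S d)) = S" by (simp add: image_image)
  have "bij_betw (Phi i) (CF_S r k S) (CF_S r k (\<lambda>d. sw i ` S d))"
  proof (rule bij_betw_byWitness[where f'="Phi i"])
    show "\<forall>a\<in>CF_S r k S. Phi i (Phi i a) = a" using Phi_props[OF i] by blast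
    show "\<forall>a\<in>CF_S r k (\<lambda>d. sw i ` S d). Phi i (Phi i a) = a" using Phi_props[OF i] by blast
    show "Phi i ` CF_S r k S \<subseteq> CF_S r k (\<lambda>d. sw i ` S d)" using Phi_props[OF i] by blast
    show "Phi i ` CF_S r k (\<lambda>d. sw i ` S d) \<subseteq> CF_S r k S"
      using Phi_props(1)[OF i, of _ k "\<lambda>d. sw i ` S d"] SS by auto
  qed
  then show ?thesis by (rule bij_betw_same_card)
qed




definition good :: "(nat \<Rightarrow> nat) \<Rightarrow> nat \<Rightarrow> nat \<Rightarrow> (nat \<Rightarrow> nat) \<Rightarrow> bool" where
  "good r k n f \<longleftrightarrow> (\<forall>S. card (CF_S r k S) = card (CF_S r k (\<lambda>d. f ` S d)))"

lemma good_id: "good r k n id" unfolding good_def by simp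

lemma good_comp: "good r k n f \<Longrightarrow> good r k n g \<Longrightarrow> good r k n (f \<circ> g)"
  unfolding good_def
proof (intro allI)
  fix S :: "nat \<Rightarrow> nat set"
  assume f: "\<forall>S. card (CF_S r k S) = card (CF_S r k (\<lambda>d. f ` S d))"
    and g: "\<forall>S. card (CF_S r k S) = card (CF_S r k (\<lambda>d. g ` S d))"
  have "card (CF_S r k S) = card (CF_S r k (\<lambda>d. g ` S d))" using g by blast
  also have "\<dots> = card (CF_S r k (\<lambda>d. f ` g ` S d))" using f by blast
  finally show "card (CF_S r k S) = card (CF_S r k (\<lambda>d. (f \<circ> g) ` S d))" by (simp add: image_comp)
qed

lemma good_sw: "1 \<le> i \<Longrightarrow> Suc i \<le> n_of r \<Longrightarrow> good r k (n_of r) (sw i)"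
  unfolding good_def using card_swap by blast

lemma transpose_conj: "a < b \<Longrightarrow> Suc a < b \<Longrightarrow>
  Transposition.transpose a b = sw a \<circ> Transposition.transpose (Suc a) b \<circ> sw a"
  by (rule ext) (auto simp: transpose_def)

lemma good_transpose_lt: "1 \<le> a \<Longrightarrow> a < b \<Longrightarrow> b \<le> n_of r \<Longrightarrow> good r k (n_of r) (Transposition.transpose a b)"
proof (induction "b - a" arbitrary: a)
  case 0 then show ?case by simp
next
  case (Suc m)
  show ?case
  proof (cases "b = Suc a")
    case True
    then show ?thesis using good_sw Suc.prems by simp
  next
    case False
    then have lt: "Suc a < b" using Suc.prems by simp
    have g1: "good r k (n_of r) (sw a)" using good_sw Suc.prems lt by simp
    have g2: "good r k (n_of r) (Transposition.transpose (Suc a) b)"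
      using Suc.hyps(1)[of "Suc a"] Suc.hyps(2) Suc.prems lt by simp
    show ?thesis unfolding transpose_conj[OF Suc.prems(2) lt]
      by (intro good_comp g1 g2)
  qed
qed

lemma good_transpose: "a \<in> {1..n_of r} \<Longrightarrow> b \<in> {1..n_of r} \<Longrightarrow> good r k (n_of r) (Transposition.transpose a b)"
proof -
  assume a: "a \<in> {1..n_of r}" "b \<in> {1..n_of r}"
  consider "a < b" | "a = b" | "b < a" by arith
  then show ?thesis
  proof cases
    case 1 then show ?thesis using good_transpose_lt a by auto
  next
    case 2 then show ?thesis using good_id by (simp add: id_def)
  next
    case 3
    then have "good r k (n_of r) (Transposition.transpose b a)" using good_transpose_lt[of b a] a by auto
    then show ?thesis by (metis transpose_commute)
  qed
qed

lemma good_perm: assumes "p permutes {1..n_of r}" shows "good r k (n_of r) p"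
  using assms finite_atLeastAtMost[of 1 "n_of r"]
proof (induction rule: permutes_induct)
  case id then show ?case by (rule good_id)
next
  case (swap a b p) then show ?case using good_comp good_transpose by blast
qed

lemma labels_in_cong: "wf_col k t \<Longrightarrow> (\<forall>d\<ge>1. S d = S' d) \<Longrightarrow> labels_in S t = labels_in S' t"
proof (induction t)
  case (Inner l c ts)
  have "length ts \<ge> 1" using Inner.prems by (cases ts) auto
  then show ?case using Inner by auto
qed simp

lemma CF_S_cong: "(\<forall>d\<ge>1. S d = S' d) \<Longrightarrow> CF_S r k S = CF_S r k S'"
  unfolding CF_S_def CF_def using labels_in_cong by blast

lemma exists_perm:
  assumes S1: "S1 \<in> V r" and S2: "S2 \<in> V r"
  shows "\<exists>p. p permutes {1..n_of r} \<and> (\<forall>d\<ge>1. S2 d = p ` S1 d)"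
proof -
  let ?N = "{1..n_of r}"
  have v1: "(\<forall>i\<ge>1. S1 i \<subseteq> ?N \<and> card (S1 i) = r i) \<and> (\<forall>i\<ge>1. \<forall>j\<ge>1. i \<noteq> j \<longrightarrow> S1 i \<inter> S1 j = {}) \<and>
    (\<Union>i\<in>{i. 1 \<le> i}. S1 i) = ?N" using S1 unfolding V_def by (rule CollectD)
  note s1 = conjunct1[OF v1] conjunct1[OF conjunct2[OF v1]] conjunct2[OF conjunct2[OF v1]]
  have v2: "(\<forall>i\<ge>1. S2 i \<subseteq> ?N \<and> card (S2 i) = r i) \<and> (\<forall>i\<ge>1. \<forall>j\<ge>1. i \<noteq> j \<longrightarrow> S2 i \<inter> S2 j = {}) \<and>
    (\<Union>i\<in>{i. 1 \<le> i}. S2 i) = ?N" using S2 unfolding V_def by (rule CollectD)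
  note s2 = conjunct1[OF v2] conjunct1[OF conjunct2[OF v2]] conjunct2[OF conjunct2[OF v2]]
  have "\<forall>d. \<exists>h. d \<ge> 1 \<longrightarrow> bij_betw h (S1 d) (S2 d)"
  proof
    fix d show "\<exists>h. d \<ge> 1 \<longrightarrow> bij_betw h (S1 d) (S2 d)"
    proof (cases "d \<ge> 1")
      case True
      have "S1 d \<subseteq> ?N" "S2 d \<subseteq> ?N" using s1(1) s2(1) True by blast+
      then have "finite (S1 d)" "finite (S2 d)" using finite_subset[OF _ finite_atLeastAtMost] by blast+
      moreover have "card (S1 d) = card (S2 d)" using s1(1) s2(1) True by simp
      ultimately obtain h where "bij_betw h (S1 d) (S2 d)" using finite_same_card_bij by blast
      then show ?thesis by blast
    qed simp
  qed
  from choice[OF this] obtain g where g0: "\<forall>d. d \<ge> 1 \<longrightarrow> bij_betw (g d) (S1 d) (S2 d)" by blast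
  have g: "bij_betw (g d) (S1 d) (S2 d)" if "d \<ge> 1" for d using g0 that by blast
  define own where "own x = (THE d. d \<ge> 1 \<and> x \<in> S1 d)" for x
  have own: "own x = d" if "d \<ge> 1" "x \<in> S1 d" for x d
    unfolding own_def
  proof (rule the_equality)
    show "1 \<le> d \<and> x \<in> S1 d" using that by simp
    fix d' assume d': "1 \<le> d' \<and> x \<in> S1 d'"
    show "d' = d"
    proof (rule ccontr)
      assume "d' \<noteq> d"
      then have "S1 d' \<inter> S1 d = {}" using s1(2) d' that(1) by simp
      then show False using d' that(2) by blast
    qed
  qed
  define p where "p x = (if x \<in> ?N then g (own x) x else x)" for x
  have pS: "p ` S1 d = S2 d" if "d \<ge> 1" for d
  proof -
    have "p ` S1 d = g d ` S1 d"
    proof (rule image_cong)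
      fix x assume x: "x \<in> S1 d"
      then have "x \<in> ?N" using s1(1) that by blast
      then show "p x = g d x" unfolding p_def using own[OF that x] by simp
    qed simp
    then show ?thesis using g[OF that] by (simp add: bij_betw_def)
  qed
  have cover: "\<exists>d\<ge>1. x \<in> S1 d" if "x \<in> ?N" for x
  proof -
    have "x \<in> (\<Union>i\<in>{i. 1 \<le> i}. S1 i)" using s1(3) that by simp
    then show ?thesis by blast
  qed
  have inj: "inj_on p ?N"
  proof (rule inj_onI)
    fix x y assume x: "x \<in> ?N" and y: "y \<in> ?N" and e: "p x = p y"
    obtain dx where dx: "dx \<ge> 1" "x \<in> S1 dx" using cover x by blast
    obtain dy where dy: "dy \<ge> 1" "y \<in> S1 dy" using cover y by blast
    have "p x \<in> p ` S1 dx" by (rule imageI[OF dx(2)])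
    then have px: "p x \<in> S2 dx" unfolding pS[OF dx(1)] .
    have "p y \<in> p ` S1 dy" by (rule imageI[OF dy(2)])
    then have py: "p y \<in> S2 dy" unfolding pS[OF dy(1)] .
    have "dx = dy"
    proof (rule ccontr)
      assume "dx \<noteq> dy"
      then have "S2 dx \<inter> S2 dy = {}" using s2(2) dx(1) dy(1) by simp
      moreover have "p x \<in> S2 dy" using py e by simp
      ultimately show False using px by (metis IntI empty_iff)
    qed
    have "p x = g dx x" using x own[OF dx] unfolding p_def by simp
    moreover have "p y = g dx y" using y own[OF dy] \<open>dx = dy\<close> unfolding p_def by simp
    ultimately have ge: "g dx x = g dx y" using e by simp
    have gi: "inj_on (g dx) (S1 dx)" using g[OF dx(1)] by (simp add: bij_betw_def)
    have yd: "y \<in> S1 dx" using dy(2) \<open>dx = dy\<close> by simp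
    show "x = y" by (rule inj_onD[OF gi ge dx(2) yd])
  qed
  have img: "p ` ?N = ?N"
  proof -
    have "p ` ?N = p ` (\<Union>i\<in>{i. 1 \<le> i}. S1 i)" using s1(3) by simp
    also have "\<dots> = (\<Union>i\<in>{i. 1 \<le> i}. S2 i)" using pS by (simp add: image_UN)
    also have "\<dots> = ?N" using s2(3) .
    finally show ?thesis .
  qed
  have "p permutes ?N"
  proof (rule bij_imp_permutes)
    show "bij_betw p ?N ?N" unfolding bij_betw_def using inj img by blast
    show "p x = x" if "x \<notin> ?N" for x unfolding p_def using that by (simp only: if_False)
  qed
  then show ?thesis using pS by metis
qed

theorem lemma3p4:
  fixes r :: "nat \<Rightarrow> nat" and k :: nat and S1 S2 :: "nat \<Rightarrow> nat set"
  assumes "finite {i. r i \<noteq> 0}"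
    and "S1 \<in> V r" and "S2 \<in> V r"
  shows "card (CF_S r k S1) = card (CF_S r k S2)"
proof -
  obtain p where p: "p permutes {1..n_of r}" "\<forall>d\<ge>1. S2 d = p ` S1 d"
    using exists_perm assms(2,3) by blast
  have "CF_S r k S2 = CF_S r k (\<lambda>d. p ` S1 d)" by (rule CF_S_cong) (use p(2) in simp)
  moreover have "good r k (n_of r) p" by (rule good_perm[OF p(1)])
  ultimately show ?thesis unfolding good_def by simp
qed


end
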